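(* Let $1\le p\le q$, $n=p+q$, and let $\mu=(a_1,\dots,a_p\mid b_1,\dots,b_q)\in\mathbb{Z}^n$ be $\Delta^+(\mathfrak{k},\mathfrak{t})$-dominant with $\mu-\beta$ also $\Delta^+(\mathfrak{k},\mathfrak{t})$-dominant, and suppose $\mu\in\Lambda_{f,g}$ for some $1\le f\le p$, $1\le g\le q$. Let $\tau=(k_1,\dots,k_p\mid r_1,\dots,r_q)\in\Omega_{p,q}$. (a) If $\mu$ is a $\partial R$-weight and $k_1>a_1$, then there exists $\tau'=(k'_1,\dots,k'_p\mid r'_1,\dots,r'_q)\in\Omega_{p,q}$ with $\{\mu-\tau\}\gg\{\mu-\tau'\}$ and $$(k'_1,\dots,k'_p)=(a_1,\underbrace{a_1-1,\dots,a_1-1}_{h-1},k_{h+1},\dots,k_p),$$ where $h$ is the largest index with $k_h\ge a_1$. (b) If $\mu$ is a $\partial L$-weight and $r_1>b_1$, then there exists $\tau'=(k'_1,\dots,k'_p\mid r'_1,\dots,r'_q)\in\Omega_{p,q}$ with $\{\mu-\tau\}\gg\{\mu-\tau'\}$ and $$(r'_1,\dots,r'_q)=(b_1,\underbrace{b_1-1,\dots,b_1-1}_{h-1},r_{h+1},\dots,r_q),$$ where $h$ is the largest index with $r_h\ge b_1$.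
   Context: $\Delta^+(\mathfrak{k},\mathfrak{t})$-dominant means $a_1\ge\cdots\ge a_p\ge0$ and $b_1\ge\cdots\ge b_q\ge0$; $\beta=(1,0,\dots,0\mid1,0,\dots,0)$. $\Lambda_{f,g}$ is the set of such $\mu$ with $\sum_{i=1}^f a_i+\sum_{j=1}^g b_j>2pq-2(p-f)(q-g)$. $\mu$ is a $\partial R$-weight if $q\ge a_1\ge1$, $2p\ge b_1\ge p+1$ and $a_1+b_1\le 2p+q-1$; a $\partial L$-weight if $2q\ge a_1\ge q+1$, $p\ge b_1\ge 1$ and $a_1+b_1\le p+2q-1$. $\Omega_{p,q}$ is the set of $(x\mid y)\in\mathbb{Z}^n$ with $q\ge x_1\ge\cdots\ge x_p\ge0$ and $y_j=\#\{i\mid q-x_i\ge j\}$ ($1\le j\le q$). For $\nu\in\mathbb{Z}^n$, $\{\nu\}$ is obtained by taking absolute values of all coordinates and sorting the first $p$ and the last $q$ coordinates separately in decreasing order. $u\gg v$ means $u_i\ge v_i$ for all $i$ with strict inequality for some $i$. *)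

theory Defs
  imports Main
begin

text \<open>A weight (x_1,...,x_p | y_1,...,y_q) in Z^n, n = p+q, is represented by two
  int lists xs (length p) and ys (length q); list index i corresponds to coordinate i+1.\<close>

definition k_dominant :: "int list \<Rightarrow> int list \<Rightarrow> bool" where
  "k_dominant xs ys \<longleftrightarrow>
     sorted_wrt (\<ge>) xs \<and> (\<forall>x\<in>set xs. 0 \<le> x) \<and>
     sorted_wrt (\<ge>) ys \<and> (\<forall>y\<in>set ys. 0 \<le> y)"

text \<open>subtract beta = (1,0,...,0 | 1,0,...,0) from a nonempty weight\<close>
definition minus_beta :: "int list \<Rightarrow> int list" where
  "minus_beta xs = xs[0 := xs ! 0 - 1]"

definition in_Lambda :: "nat \<Rightarrow> nat \<Rightarrow> nat \<Rightarrow> nat \<Rightarrow> int list \<Rightarrow> int list \<Rightarrow> bool" where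
  "in_Lambda p q f g xs ys \<longleftrightarrow> k_dominant xs ys \<and>
     sum_list (take f xs) + sum_list (take g ys)
       > 2 * int p * int q - 2 * (int p - int f) * (int q - int g)"

definition dR_weight :: "nat \<Rightarrow> nat \<Rightarrow> int list \<Rightarrow> int list \<Rightarrow> bool" where
  "dR_weight p q xs ys \<longleftrightarrow>
     int q \<ge> xs ! 0 \<and> xs ! 0 \<ge> 1 \<and> 2 * int p \<ge> ys ! 0 \<and> ys ! 0 \<ge> int p + 1 \<and>
     xs ! 0 + ys ! 0 \<le> 2 * int p + int q - 1"

definition dL_weight :: "nat \<Rightarrow> nat \<Rightarrow> int list \<Rightarrow> int list \<Rightarrow> bool" where
  "dL_weight p q xs ys \<longleftrightarrow>
     2 * int q \<ge> xs ! 0 \<and> xs ! 0 \<ge> int q + 1 \<and> int p \<ge> ys ! 0 \<and> ys ! 0 \<ge> 1 \<and>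
     xs ! 0 + ys ! 0 \<le> int p + 2 * int q - 1"

definition in_Omega :: "nat \<Rightarrow> nat \<Rightarrow> int list \<Rightarrow> int list \<Rightarrow> bool" where
  "in_Omega p q xs ys \<longleftrightarrow>
     length xs = p \<and> length ys = q \<and>
     (\<forall>x\<in>set xs. x \<le> int q \<and> 0 \<le> x) \<and> sorted_wrt (\<ge>) xs \<and>
     (\<forall>j<q. ys ! j = int (card {i. i < p \<and> int q - xs ! i \<ge> int (j + 1)}))"

definition brace :: "int list \<Rightarrow> int list \<Rightarrow> int list" where
  "brace xs ys = rev (sort (map abs xs)) @ rev (sort (map abs ys))"

definition gg :: "int list \<Rightarrow> int list \<Rightarrow> bool" (infix "\<ggreater>" 50) where
  "u \<ggreater> v \<longleftrightarrow> length u = length v \<and> (\<forall>i<length u. u ! i \<ge> v ! i) \<and>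
     (\<exists>i<length u. u ! i > v ! i)"

definition vminus :: "int list \<Rightarrow> int list \<Rightarrow> int list" where
  "vminus u v = map2 (-) u v"

text \<open>largest (1-based) index h with xs_h \<ge> c\<close>
definition last_ge :: "int list \<Rightarrow> int \<Rightarrow> nat" where
  "last_ge xs c = (GREATEST h. 1 \<le> h \<and> h \<le> length xs \<and> xs ! (h - 1) \<ge> c)"

end

theory Submission
  imports Defs "HOL-Library.Multiset"
begin


lemma length_filter_sort: "length (filter P (sort xs)) = length (filter P xs)"
  by (simp add: filter_sort)

lemma sort_mono_nth:
  fixes xs ys :: "'a::linorder list"
  assumes len: "length xs = length ys" and le: "\<forall>i<length xs. xs!i \<le> ys!i" and i: "i < length xs"
  shows "sort xs ! i \<le> sort ys ! i"
proof (rule ccontr)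
  define c where "c = sort ys ! i"
  assume "\<not> sort xs ! i \<le> sort ys ! i"
  hence ci: "c < sort xs ! i" by (simp add: c_def)
  have "{0..i} \<subseteq> {j. j < length (sort ys) \<and> sort ys ! j \<le> c}"
    using i len by (auto simp: c_def intro: sorted_nth_mono)
  hence "i + 1 \<le> card {j. j < length (sort ys) \<and> sort ys ! j \<le> c}"
  proof -
    have "card {0..i} \<le> card {j. j < length (sort ys) \<and> sort ys ! j \<le> c}"
      by (rule card_mono) (use \<open>{0..i} \<subseteq> _\<close> in auto)
    thus ?thesis by simp
  qed
  also have "\<dots> = length (filter (\<lambda>z. z \<le> c) ys)"
    using length_filter_conv_card[of "\<lambda>z. z \<le> c" "sort ys"] length_filter_sort[of "\<lambda>z. z \<le> c" ys] by simp
  also have "\<dots> = card {j. j < length ys \<and> ys ! j \<le> c}" by (simp add: length_filter_conv_card)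
  also have "\<dots> \<le> card {j. j < length xs \<and> xs ! j \<le> c}"
    by (rule card_mono) (use len le in \<open>auto intro: order_trans\<close>)
  also have "\<dots> = card {j. j < length (sort xs) \<and> sort xs ! j \<le> c}"
    using length_filter_conv_card[of "\<lambda>z. z \<le> c" "sort xs"] length_filter_sort[of "\<lambda>z. z \<le> c" xs]
      length_filter_conv_card[of "\<lambda>z. z \<le> c" xs] by simp
  also have "\<dots> \<le> card {0..<i}"
  proof (rule card_mono)
    show "{j. j < length (sort xs) \<and> sort xs ! j \<le> c} \<subseteq> {0..<i}"
    proof
      fix j assume "j \<in> {j. j < length (sort xs) \<and> sort xs ! j \<le> c}"
      hence j: "j < length (sort xs)" "sort xs ! j \<le> c" by auto
      show "j \<in> {0..<i}"
      proof (rule ccontr)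
        assume "j \<notin> {0..<i}"
        hence "i \<le> j" by auto
        hence "sort xs ! i \<le> sort xs ! j" using j by (intro sorted_nth_mono) auto
        thus False using j ci by auto
      qed
    qed
  qed auto
  finally show False by simp
qed

lemma rsort_mono_nth:
  fixes xs ys :: "'a::linorder list"
  assumes len: "length xs = length ys" and le: "\<forall>i<length xs. xs!i \<le> ys!i" and i: "i < length xs"
  shows "rev (sort xs) ! i \<le> rev (sort ys) ! i"
  using sort_mono_nth[OF len le, of "length xs - Suc i"] i len by (simp add: rev_nth)

lemma sum_list_sort: "sum_list (sort xs) = sum_list (xs::int list)"
  using sum_mset_sum_list[of "sort xs"] sum_mset_sum_list[of xs] by simp

lemma sum_abs_le:
  fixes u u' :: "int list"
  assumes "length u' = length u" "\<forall>i<length u. \<bar>u'!i\<bar> \<le> \<bar>u!i\<bar>"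
  shows "sum_list (map abs u') \<le> sum_list (map abs u)"
proof -
  have "(\<Sum>i = 0..<length u. \<bar>u'!i\<bar>) \<le> (\<Sum>i = 0..<length u. \<bar>u!i\<bar>)"
    using assms by (intro sum_mono) auto
  thus ?thesis using assms(1) by (simp add: sum_list_sum_nth)
qed

lemma sum_abs_less:
  fixes u u' :: "int list"
  assumes "length u' = length u" "\<forall>i<length u. \<bar>u'!i\<bar> \<le> \<bar>u!i\<bar>" "\<exists>i<length u. \<bar>u'!i\<bar> < \<bar>u!i\<bar>"
  shows "sum_list (map abs u') < sum_list (map abs u)"
proof -
  have "(\<Sum>i = 0..<length u. \<bar>u'!i\<bar>) < (\<Sum>i = 0..<length u. \<bar>u!i\<bar>)"
    using assms by (intro sum_strict_mono_ex1) auto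
  thus ?thesis using assms(1) by (simp add: sum_list_sum_nth)
qed

lemma brace_gg:
  fixes u v u' v' :: "int list"
  assumes lu: "length u' = length u" and lv: "length v' = length v"
   and hu: "\<forall>i<length u. \<bar>u'!i\<bar> \<le> \<bar>u!i\<bar>" and hv: "\<forall>j<length v. \<bar>v'!j\<bar> \<le> \<bar>v!j\<bar>"
   and st: "(\<exists>i<length u. \<bar>u'!i\<bar> < \<bar>u!i\<bar>) \<or> (\<exists>j<length v. \<bar>v'!j\<bar> < \<bar>v!j\<bar>)"
  shows "brace u v \<ggreater> brace u' v'"
proof -
  have L: "length (brace u' v') = length (brace u v)" using lu lv by (simp add: brace_def)
  have P1: "\<forall>i<length u. rev (sort (map abs u')) ! i \<le> rev (sort (map abs u)) ! i"
    using rsort_mono_nth[of "map abs u'" "map abs u"] lu hu by simp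
  have P2: "\<forall>i<length v. rev (sort (map abs v')) ! i \<le> rev (sort (map abs v)) ! i"
    using rsort_mono_nth[of "map abs v'" "map abs v"] lv hv by simp
  have P: "\<forall>i<length (brace u v). brace u' v' ! i \<le> brace u v ! i"
  proof (intro allI impI)
    fix i assume "i < length (brace u v)"
    thus "brace u' v' ! i \<le> brace u v ! i"
      using P1 P2 lu lv by (cases "i < length u") (auto simp: brace_def nth_append)
  qed
  have S: "sum_list (brace u' v') < sum_list (brace u v)"
  proof -
    have "sum_list (brace u v) = sum_list (map abs u) + sum_list (map abs v)"
      by (simp add: brace_def sum_list_sort)
    moreover have "sum_list (brace u' v') = sum_list (map abs u') + sum_list (map abs v')"
      by (simp add: brace_def sum_list_sort)
    moreover have "sum_list (map abs u') \<le> sum_list (map abs u)" using sum_abs_le lu hu by blast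
    moreover have "sum_list (map abs v') \<le> sum_list (map abs v)" using sum_abs_le lv hv by blast
    moreover have "sum_list (map abs u') < sum_list (map abs u) \<or> sum_list (map abs v') < sum_list (map abs v)"
      using st sum_abs_less lu hu lv hv by blast
    ultimately show ?thesis by linarith
  qed
  have "\<exists>i<length (brace u v). brace u' v' ! i < brace u v ! i"
  proof (rule ccontr)
    assume N: "\<not> ?thesis"
    have Q: "\<forall>i<length (brace u v). brace u v ! i \<le> brace u' v' ! i"
    proof (intro allI impI)
      fix i assume "i < length (brace u v)"
      thus "brace u v ! i \<le> brace u' v' ! i" using N by (meson not_less)
    qed
    have "brace u' v' = brace u v"
    proof (rule nth_equalityI)
      show "length (brace u' v') = length (brace u v)" by (rule L)
      fix i assume i: "i < length (brace u' v')"
      have "brace u' v' ! i \<le> brace u v ! i" using P L i by simp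
      moreover have "brace u v ! i \<le> brace u' v' ! i" using Q L i by simp
      ultimately show "brace u' v' ! i = brace u v ! i" by (rule order_antisym)
    qed
    thus False using S by simp
  qed
  thus ?thesis using P L by (simp add: gg_def)
qed



lemma sum_take_nth: "f \<le> length a \<Longrightarrow> sum_list (take f a) = (\<Sum>i = 0..<f. a ! i)"
  by (simp add: sum_list_sum_nth min_def)

lemma lam_bound:
  fixes p q f g :: nat and a b :: "int list"
  assumes la: "length a = p" and lb: "length b = q"
  and f1: "1 \<le> f" and fp: "f \<le> p" and g1: "1 \<le> g" and gq: "g \<le> q"
  and a1: "\<forall>i<p. 1 \<le> i \<longrightarrow> a!i \<le> a!0 - 1"
  and b1: "\<forall>j<q. 1 \<le> j \<longrightarrow> b!j \<le> b!0 - 1"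
  and bs: "sorted_wrt (\<ge>) b"
  and a0: "1 \<le> a!0" "a!0 \<le> int q"
  and b0: "b!0 \<le> 2*int p" "int p + 1 \<le> b!0"
  and lam: "sum_list (take f a) + sum_list (take g b) > 2*int p*int q - 2*(int p - int f)*(int q - int g)"
  shows "int p \<le> b ! nat (int q - a!0)"
proof (rule ccontr)
  define m where "m = nat (int q - a!0)"
  have mq: "m < q" and Mm: "int m = int q - a!0" using a0 by (auto simp: m_def)
  assume "\<not> int p \<le> b ! nat (int q - a!0)"
  hence bm: "b ! m \<le> int p - 1" by (simp add: m_def)
  have m1: "1 \<le> m" using bm b0 by (cases m) auto
  have bge: "b ! j \<le> int p - 1" if "m \<le> j" "j < q" for j
  proof -
    have "b!j \<le> b!m" using bs that lb by (cases "m = j") (auto simp: sorted_wrt_iff_nth_less)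
    thus ?thesis using bm by simp
  qed
  have SA: "sum_list (take f a) \<le> a!0 + (int f - 1) * (a!0 - 1)"
  proof -
    have "sum_list (take f a) = (\<Sum>i = 0..<f. a ! i)" using fp la by (simp add: sum_take_nth)
    also have "{0..<f} = insert 0 {1..<f}" using f1 by auto
    also have "(\<Sum>i \<in> insert 0 {1..<f}. a ! i) = a!0 + (\<Sum>i = 1..<f. a ! i)" by simp
    also have "(\<Sum>i = 1..<f. a ! i) \<le> of_nat (card {1..<f}) * (a!0 - 1)"
      by (rule sum_bounded_above) (use a1 fp in auto)
    finally show ?thesis using f1 by (simp add: of_nat_diff)
  qed
  have SB0: "(\<Sum>j = 0..<n. b ! j) \<le> 2 * int p + (int n - 1) * (2 * int p - 1)" if "1 \<le> n" "n \<le> q" for n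
  proof -
    have "{0..<n} = insert 0 {1..<n}" using that by auto
    hence "(\<Sum>j = 0..<n. b ! j) = b!0 + (\<Sum>j = 1..<n. b ! j)" by simp
    also have "(\<Sum>j = 1..<n. b ! j) \<le> of_nat (card {1..<n}) * (2 * int p - 1)"
    proof (rule sum_bounded_above)
      fix i assume "i \<in> {1..<n}"
      hence "b!i \<le> b!0 - 1" using b1 that by auto
      thus "b!i \<le> 2 * int p - 1" using b0 by simp
    qed
    finally show ?thesis using that b0 by (simp add: of_nat_diff)
  qed
  show False
  proof (cases "g \<le> m")
    case True
    have SB: "sum_list (take g b) \<le> 2 * int p + (int g - 1) * (2 * int p - 1)"
      using SB0[of g] g1 gq lb by (simp add: sum_take_nth)
    have h1: "int f * a!0 \<le> int f * (int q - int g)" using True Mm by (intro mult_left_mono) auto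
    have h2: "int f * 1 \<le> int f * a!0" using a0 by (intro mult_left_mono) auto
    show False using lam SA SB h1 h2 f1 g1 by (simp add: algebra_simps)
  next
    case False
    define d where "d = int g - int m"
    have d1: "1 \<le> d" using False by (simp add: d_def)
    have "sum_list (take g b) = (\<Sum>j = 0..<g. b ! j)" using gq lb by (simp add: sum_take_nth)
    also have "\<dots> = (\<Sum>j = 0..<m. b ! j) + (\<Sum>j = m..<g. b ! j)"
      using False by (simp add: sum.atLeastLessThan_concat)
    also have "(\<Sum>j = m..<g. b ! j) \<le> of_nat (card {m..<g}) * (int p - 1)"
      by (rule sum_bounded_above) (use bge gq in auto)
    finally have SB: "sum_list (take g b) \<le> 2 * int p + (int m - 1) * (2 * int p - 1) + d * (int p - 1)"
      using SB0[of m] m1 mq False by (simp add: d_def of_nat_diff)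
    have h1: "int f * d \<le> int p * d" using fp d1 by (intro mult_right_mono) auto
    have h2: "int f * d \<le> int f * a!0" using gq Mm by (intro mult_left_mono) (auto simp: d_def)
    have qg: "int q - int g = a!0 - d" using Mm by (simp add: d_def)
    have gg': "int g = int m + d" by (simp add: d_def)
    have E1: "int p * int m = int p * int g - int p * d" using gg' by (simp add: algebra_simps)
    have E2: "int f * int q - int f * int g = int f * a!0 - int f * d"
    proof -
      have "int f * (int q - int g) = int f * (a!0 - d)" using qg by simp
      thus ?thesis by (simp add: algebra_simps)
    qed
    have lam': "sum_list (take f a) + sum_list (take g b) > 2*(int p*int g) + 2*(int f*int q - int f*int g)"
      using lam by (simp add: algebra_simps)
    have SA': "sum_list (take f a) \<le> int f * a!0 - int f + 1" using SA by (simp add: algebra_simps)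
    have SB': "sum_list (take g b) \<le> 2 * (int p * int m) - int m + 1 + int p * d - d"
      using SB by (simp add: algebra_simps)
    have h1': "int f * d \<le> int p * d" using h1 .
    have "1 \<le> int f" "1 \<le> int g" using f1 g1 by auto
    thus False using lam' SA' SB' h1' h2 E1 E2 gg' by (smt (verit))
  qed
qed



lemma last_ge_prop:
  assumes s: "sorted_wrt (\<ge>) xs" and ne: "xs \<noteq> []" and c: "c \<le> xs!0"
  shows "1 \<le> last_ge xs c" "last_ge xs c \<le> length xs"
    "\<forall>i<length xs. (c \<le> xs!i \<longleftrightarrow> i < last_ge xs c)"
proof -
  define P where "P h \<longleftrightarrow> 1 \<le> h \<and> h \<le> length xs \<and> xs ! (h - 1) \<ge> c" for h
  have L: "last_ge xs c = Greatest P" unfolding last_ge_def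
    by (rule arg_cong[where f=Greatest]) (simp add: fun_eq_iff P_def)
  have P1: "P 1" using ne c by (simp add: P_def Suc_le_eq)
  have bd: "\<And>y. P y \<Longrightarrow> y \<le> length xs" by (simp add: P_def)
  have PG: "P (last_ge xs c)" unfolding L by (rule GreatestI_nat[where P=P, OF P1 bd])
  have GE: "\<And>y. P y \<Longrightarrow> y \<le> last_ge xs c" unfolding L by (rule Greatest_le_nat[where P=P, OF _ bd])
  show "1 \<le> last_ge xs c" "last_ge xs c \<le> length xs" using PG by (auto simp: P_def)
  show "\<forall>i<length xs. (c \<le> xs!i \<longleftrightarrow> i < last_ge xs c)"
  proof (intro allI impI iffI)
    fix i assume i: "i < length xs" "c \<le> xs!i"
    hence "P (Suc i)" by (simp add: P_def)
    thus "i < last_ge xs c" using GE by fastforce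
  next
    fix i assume i: "i < length xs" "i < last_ge xs c"
    have "xs ! (last_ge xs c - 1) \<le> xs ! i"
      using s i PG by (cases "i = last_ge xs c - 1") (auto simp: P_def sorted_wrt_iff_nth_less)
    thus "c \<le> xs!i" using PG by (simp add: P_def)
  qed
qed

lemma kp_nth:
  assumes "1 \<le> h" "h \<le> length k" "i < length k"
  shows "(c # replicate (h-1) d @ drop h k) ! i = (if i = 0 then c else if i < h then d else k!i)"
  using assms by (cases i) (auto simp: nth_append)

lemma kp_len:
  assumes "1 \<le> h" "h \<le> length k"
  shows "length (c # replicate (h-1) d @ drop h k) = length k"
  using assms by simp

lemma vminus_len: "length u = length v \<Longrightarrow> length (vminus u v) = length u"
  by (simp add: vminus_def)

lemma vminus_nth: "length u = length v \<Longrightarrow> i < length u \<Longrightarrow> vminus u v ! i = u!i - v!i"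
  by (simp add: vminus_def)

lemma partA:
  fixes p q :: nat and a b k r :: "int list"
  assumes p1: "1 \<le> p" and la: "length a = p" and lb: "length b = q"
  and a1: "\<forall>i<p. 1 \<le> i \<longrightarrow> a!i \<le> a!0 - 1"
  and a0: "1 \<le> a!0" "a!0 \<le> int q"
  and bp: "int p \<le> b ! nat (int q - a!0)"
  and bs: "sorted_wrt (\<ge>) b"
  and om: "in_Omega p q k r"
  and ka: "k!0 > a!0"
  shows "\<exists>k' r'. in_Omega p q k' r' \<and>
               brace (vminus a k) (vminus b r) \<ggreater> brace (vminus a k') (vminus b r') \<and>
               k' = a ! 0 # replicate (last_ge k (a ! 0) - 1) (a ! 0 - 1)
                      @ drop (last_ge k (a ! 0)) k"
proof -
  have lk: "length k = p" and lr: "length r = q" and kb: "\<forall>x\<in>set k. x \<le> int q \<and> 0 \<le> x"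
    and ks: "sorted_wrt (\<ge>) k"
    and rc: "\<forall>j<q. r ! j = int (card {i. i < p \<and> int q - k ! i \<ge> int (j + 1)})"
    using om by (auto simp: in_Omega_def)
  define h where "h = last_ge k (a!0)"
  have kne: "k \<noteq> []" using lk p1 by auto
  have h1: "1 \<le> h" and hp: "h \<le> p" and hk: "\<forall>i<p. (a!0 \<le> k!i \<longleftrightarrow> i < h)"
    using last_ge_prop[OF ks kne, of "a!0"] ka lk by (auto simp: h_def)
  define k' where "k' = a ! 0 # replicate (h - 1) (a ! 0 - 1) @ drop h k"
  have lk': "length k' = p" using h1 hp lk by (simp add: k'_def)
  have k'n: "\<And>i. i < p \<Longrightarrow> k'!i = (if i = 0 then a!0 else if i < h then a!0 - 1 else k!i)"
    unfolding k'_def using kp_nth[of h k] h1 hp lk by simp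
  define r' where "r' = map (\<lambda>j. int (card {i. i < p \<and> int q - k' ! i \<ge> int (j + 1)})) [0..<q]"
  have kbi: "\<And>i. i < p \<Longrightarrow> k!i \<le> int q \<and> 0 \<le> k!i" using kb lk by auto
  have ksi: "\<And>i j. i \<le> j \<Longrightarrow> j < p \<Longrightarrow> k!j \<le> k!i"
    using ks lk by (metis le_eq_less_or_eq order_refl sorted_wrt_iff_nth_less)
  have k'le: "\<And>i. i < p \<Longrightarrow> k'!i \<le> k!i" using k'n hk ka by fastforce
  have Om: "in_Omega p q k' r'"
    unfolding in_Omega_def
  proof (intro conjI)
    show "length k' = p" by (rule lk')
    show "length r' = q" by (simp add: r'_def)
    show "\<forall>x\<in>set k'. x \<le> int q \<and> 0 \<le> x"
    proof
      fix x assume "x \<in> set k'"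
      then obtain i where i: "i < p" "x = k'!i" using lk' by (auto simp: in_set_conv_nth)
      thus "x \<le> int q \<and> 0 \<le> x" using k'n[OF i(1)] kbi[OF i(1)] a0 by auto
    qed
    show "sorted_wrt (\<ge>) k'"
      unfolding sorted_wrt_iff_nth_less
    proof (intro allI impI)
      fix i j assume ij: "i < j" "j < length k'"
      thus "k'!j \<le> k'!i" using k'n[of i] k'n[of j] lk' hk ksi[of i j] by auto
    qed
    show "\<forall>j<q. r' ! j = int (card {i. i < p \<and> int q - k' ! i \<ge> int (j + 1)})"
      by (simp add: r'_def)
  qed
  have U: "\<forall>i<length (vminus a k). \<bar>vminus a k' ! i\<bar> \<le> \<bar>vminus a k ! i\<bar>"
  proof (intro allI impI)
    fix i assume "i < length (vminus a k)"
    hence i: "i < p" using la lk by (simp add: vminus_len)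
    show "\<bar>vminus a k' ! i\<bar> \<le> \<bar>vminus a k ! i\<bar>"
      using vminus_nth[of a k i] vminus_nth[of a k' i] la lk lk' i k'n[OF i] hk a1 ka by auto
  qed
  have U0: "\<bar>vminus a k' ! 0\<bar> < \<bar>vminus a k ! 0\<bar>"
    using vminus_nth[of a k 0] vminus_nth[of a k' 0] la lk lk' p1 k'n[of 0] ka by auto
  have V: "\<forall>j<length (vminus b r). \<bar>vminus b r' ! j\<bar> \<le> \<bar>vminus b r ! j\<bar>"
  proof (intro allI impI)
    fix j assume "j < length (vminus b r)"
    hence j: "j < q" using lb lr by (simp add: vminus_len)
    define S where "S = {i. i < p \<and> int q - k ! i \<ge> int (j + 1)}"
    define S' where "S' = {i. i < p \<and> int q - k' ! i \<ge> int (j + 1)}"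
    have rj: "r!j = int (card S)" using rc j by (simp add: S_def)
    have r'j: "r'!j = int (card S')" using j by (simp add: r'_def S'_def)
    have SS: "S \<subseteq> S'"
    proof
      fix x assume "x \<in> S"
      hence x: "x < p" "int (j+1) \<le> int q - k!x" by (auto simp: S_def)
      have "k'!x \<le> k!x" using k'le x(1) .
      thus "x \<in> S'" using x by (auto simp: S'_def)
    qed
    have cS: "card S \<le> card S'" by (rule card_mono[OF _ SS]) (simp add: S'_def)
    have cS': "card S' \<le> p"
    proof -
      have "card S' \<le> card {..<p}" by (rule card_mono) (auto simp: S'_def)
      thus ?thesis by simp
    qed
    have vb: "vminus b r ! j = b!j - r!j" "vminus b r' ! j = b!j - r'!j"
      using vminus_nth lb lr j by (auto simp: r'_def)
    show "\<bar>vminus b r' ! j\<bar> \<le> \<bar>vminus b r ! j\<bar>"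
    proof (cases "int j \<le> int q - a!0")
      case True
      have "b ! nat (int q - a!0) \<le> b!j"
        using bs True j lb a0 by (cases "nat (int q - a!0) = j") (auto simp: sorted_wrt_iff_nth_less)
      thus ?thesis using bp vb rj r'j cS cS' by auto
    next
      case False
      have "S' = S"
      proof (intro equalityI SS subsetI)
        fix i assume "i \<in> S'"
        hence i: "i < p" "int q - k'!i \<ge> int (j+1)" by (auto simp: S'_def)
        thus "i \<in> S" using k'n[OF i(1)] hk False by (auto simp: S_def split: if_splits)
      qed
      thus ?thesis using vb rj r'j by simp
    qed
  qed
  have lr': "length r' = q" by (simp add: r'_def)
  have G: "brace (vminus a k) (vminus b r) \<ggreater> brace (vminus a k') (vminus b r')"
  proof (rule brace_gg)
    show "length (vminus a k') = length (vminus a k)" using la lk lk' by (simp add: vminus_len)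
    show "length (vminus b r') = length (vminus b r)" using lb lr lr' by (simp add: vminus_len)
    show "\<forall>i<length (vminus a k). \<bar>vminus a k' ! i\<bar> \<le> \<bar>vminus a k ! i\<bar>" by (rule U)
    show "\<forall>j<length (vminus b r). \<bar>vminus b r' ! j\<bar> \<le> \<bar>vminus b r ! j\<bar>" by (rule V)
    show "(\<exists>i<length (vminus a k). \<bar>vminus a k' ! i\<bar> < \<bar>vminus a k ! i\<bar>) \<or>
      (\<exists>j<length (vminus b r). \<bar>vminus b r' ! j\<bar> < \<bar>vminus b r ! j\<bar>)"
    proof (rule disjI1)
      have "0 < length (vminus a k)" using la lk p1 by (simp add: vminus_len)
      thus "\<exists>i<length (vminus a k). \<bar>vminus a k' ! i\<bar> < \<bar>vminus a k ! i\<bar>" using U0 by blast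
    qed
  qed
  show ?thesis using Om G by (auto simp: k'_def h_def)
qed



lemma upset_mem:
  assumes mono: "\<forall>i i'. i \<le> i' \<longrightarrow> i' < p \<longrightarrow> P i \<longrightarrow> P i'" and i: "i < p"
  shows "P i \<longleftrightarrow> p - card {i. i < p \<and> P i} \<le> i"
proof (cases "\<exists>i<p. P i")
  case False
  hence E: "{i. i < p \<and> P i} = {}" by auto
  show ?thesis using False i by (simp add: E)
next
  case True
  define i0 where "i0 = (LEAST i. i < p \<and> P i)"
  have i0: "i0 < p" "P i0" using LeastI_ex[of "\<lambda>i. i < p \<and> P i"] True by (auto simp: i0_def)
  have lst: "\<And>x. x < p \<Longrightarrow> P x \<Longrightarrow> i0 \<le> x" by (simp add: i0_def Least_le)
  have S: "{i. i < p \<and> P i} = {i0..<p}"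
  proof (intro equalityI subsetI)
    fix x assume "x \<in> {i. i < p \<and> P i}" thus "x \<in> {i0..<p}" using lst by auto
  next
    fix x assume "x \<in> {i0..<p}" thus "x \<in> {i. i < p \<and> P i}" using mono i0 by auto
  qed
  have "P i \<longleftrightarrow> i0 \<le> i" using lst i mono i0 by blast
  thus ?thesis using S i0 by simp
qed

lemma partB:
  fixes p q :: nat and a b k r :: "int list"
  assumes p1: "1 \<le> p" and q1: "1 \<le> q" and la: "length a = p" and lb: "length b = q"
  and b1: "\<forall>j<q. 1 \<le> j \<longrightarrow> b!j \<le> b!0 - 1"
  and b0: "1 \<le> b!0" "b!0 \<le> int p"
  and aq: "int q \<le> a ! nat (int p - b!0)"
  and as: "sorted_wrt (\<ge>) a"
  and om: "in_Omega p q k r"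
  and rb: "r!0 > b!0"
  shows "\<exists>k' r'. in_Omega p q k' r' \<and>
               brace (vminus a k) (vminus b r) \<ggreater> brace (vminus a k') (vminus b r') \<and>
               r' = b ! 0 # replicate (last_ge r (b ! 0) - 1) (b ! 0 - 1)
                      @ drop (last_ge r (b ! 0)) r"
proof -
  have lk: "length k = p" and lr: "length r = q" and kb: "\<forall>x\<in>set k. x \<le> int q \<and> 0 \<le> x"
    and ks: "sorted_wrt (\<ge>) k"
    and rc: "\<forall>j<q. r ! j = int (card {i. i < p \<and> int q - k ! i \<ge> int (j + 1)})"
    using om by (auto simp: in_Omega_def)
  define S where "S j = {i. i < p \<and> int q - k ! i \<ge> int (j + 1)}" for j
  have kbi: "\<And>i. i < p \<Longrightarrow> k!i \<le> int q \<and> 0 \<le> k!i" using kb lk by auto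
  have ksi: "\<And>i j. i \<le> j \<Longrightarrow> j < p \<Longrightarrow> k!j \<le> k!i"
    using ks lk by (metis le_eq_less_or_eq order_refl sorted_wrt_iff_nth_less)
  have asi: "\<And>i j. i \<le> j \<Longrightarrow> j < p \<Longrightarrow> a!j \<le> a!i"
    using as la by (metis le_eq_less_or_eq order_refl sorted_wrt_iff_nth_less)
  have SU: "\<And>j i. i < p \<Longrightarrow> (i \<in> S j \<longleftrightarrow> p - card (S j) \<le> i)"
  proof -
    fix j i assume i: "i < p"
    have "(int q - k ! i \<ge> int (j + 1)) \<longleftrightarrow> p - card {i. i < p \<and> int q - k ! i \<ge> int (j + 1)} \<le> i"
    proof (rule upset_mem[OF _ i])
      show "\<forall>i i'. i \<le> i' \<longrightarrow> i' < p \<longrightarrow> int (j + 1) \<le> int q - k ! i \<longrightarrow> int (j + 1) \<le> int q - k ! i'"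
      proof (intro allI impI)
        fix i i' assume "i \<le> i'" "i' < p" "int (j + 1) \<le> int q - k ! i"
        moreover have "k!i' \<le> k!i" using ksi calculation by simp
        ultimately show "int (j + 1) \<le> int q - k ! i'" by simp
      qed
    qed
    thus "i \<in> S j \<longleftrightarrow> p - card (S j) \<le> i" using i by (simp add: S_def)
  qed
  have rS: "\<And>j. j < q \<Longrightarrow> r!j = int (card (S j))" using rc by (simp add: S_def)
  have Sfin: "\<And>j. finite (S j)" by (simp add: S_def)
  have Sp: "\<And>j. card (S j) \<le> p"
  proof -
    fix j have "card (S j) \<le> card {..<p}" by (rule card_mono) (auto simp: S_def)
    thus "card (S j) \<le> p" by simp
  qed
  have rs: "sorted_wrt (\<ge>) r"
    unfolding sorted_wrt_iff_nth_less
  proof (intro allI impI)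
    fix i j assume ij: "i < j" "j < length r"
    have "S j \<subseteq> S i" using ij by (auto simp: S_def)
    hence "card (S j) \<le> card (S i)" by (intro card_mono Sfin)
    thus "r!j \<le> r!i" using rS ij lr by simp
  qed
  define h where "h = last_ge r (b!0)"
  have rne: "r \<noteq> []" using lr q1 by auto
  have h1: "1 \<le> h" and hq: "h \<le> q" and hr: "\<forall>j<q. (b!0 \<le> r!j \<longleftrightarrow> j < h)"
    using last_ge_prop[OF rs rne, of "b!0"] rb lr by (auto simp: h_def)
  define c where "c = p - nat (b!0)"
  have cp: "c < p" and ci: "int c = int p - b!0" using b0 p1 by (auto simp: c_def)
  have nc: "nat (int p - b!0) = c" using ci by simp
  have aqc: "\<And>i. i \<le> c \<Longrightarrow> int q \<le> a!i"
  proof -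
    fix i assume "i \<le> c"
    hence "a!c \<le> a!i" using asi cp by simp
    thus "int q \<le> a!i" using aq nc by simp
  qed
  have cS0: "c \<in> S 0"
  proof -
    have "int (card (S 0)) > b!0" using rS[of 0] q1 rb by simp
    hence "p - card (S 0) \<le> c" using ci Sp[of 0] by linarith
    thus ?thesis using SU[of c 0] cp by simp
  qed
  have kc: "\<And>i. c \<le> i \<Longrightarrow> i < p \<Longrightarrow> k!i \<le> int q - 1"
  proof -
    fix i assume "c \<le> i" "i < p"
    hence "k!i \<le> k!c" by (rule ksi)
    thus "k!i \<le> int q - 1" using cS0 by (simp add: S_def)
  qed
  define k' where "k' = replicate c (int q) @ [int q - 1] @ drop (c+1) k"
  have lk': "length k' = p" using cp lk by (simp add: k'_def)
  have k'n: "\<And>i. i < p \<Longrightarrow> k'!i = (if i < c then int q else if i = c then int q - 1 else k!i)"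
    using cp lk by (auto simp: k'_def nth_append)
  define r' where "r' = b!0 # replicate (h - 1) (b!0 - 1) @ drop h r"
  have lr': "length r' = q" using h1 hq lr by (simp add: r'_def)
  have r'n: "\<And>j. j < q \<Longrightarrow> r'!j = (if j = 0 then b!0 else if j < h then b!0 - 1 else r!j)"
    unfolding r'_def using kp_nth[of h r] h1 hq lr by simp
  have Om: "in_Omega p q k' r'"
    unfolding in_Omega_def
  proof (intro conjI)
    show "length k' = p" by (rule lk')
    show "length r' = q" by (rule lr')
    show "\<forall>x\<in>set k'. x \<le> int q \<and> 0 \<le> x"
    proof
      fix x assume "x \<in> set k'"
      then obtain i where i: "i < p" "x = k'!i" using lk' by (auto simp: in_set_conv_nth)
      thus "x \<le> int q \<and> 0 \<le> x" using k'n[OF i(1)] kbi[OF i(1)] q1 by auto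
    qed
    show "sorted_wrt (\<ge>) k'"
      unfolding sorted_wrt_iff_nth_less
    proof (intro allI impI)
      fix i j assume ij: "i < j" "j < length k'"
      thus "k'!j \<le> k'!i" using k'n[of i] k'n[of j] lk' kbi[of j] kc[of j] ksi[of i j] by auto
    qed
    show "\<forall>j<q. r' ! j = int (card {i. i < p \<and> int q - k' ! i \<ge> int (j + 1)})"
    proof (intro allI impI)
      fix j assume j: "j < q"
      define T where "T = {i. i < p \<and> int q - k' ! i \<ge> int (j + 1)}"
      have Tm: "\<And>i. i < p \<Longrightarrow> i \<in> T \<longleftrightarrow> (if i < c then False else if i = c then j = 0 else i \<in> S j)"
        using k'n by (auto simp: T_def S_def)
      show "r' ! j = int (card T)"
      proof (cases "j < h")
        case True
        have "b!0 \<le> r!j" using hr j True by simp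
        hence "nat (b!0) \<le> card (S j)" using rS[OF j] by simp
        hence pc: "p - card (S j) \<le> c" by (simp add: c_def)
        have "T = (if j = 0 then {c} else {}) \<union> {c+1..<p}"
        proof (intro equalityI subsetI)
          fix i assume iT: "i \<in> T"
          hence "i < p" by (simp add: T_def)
          thus "i \<in> (if j = 0 then {c} else {}) \<union> {c+1..<p}" using Tm iT
            by (auto split: if_splits)
        next
          fix i assume "i \<in> (if j = 0 then {c} else {}) \<union> {c+1..<p}"
          thus "i \<in> T" using Tm[of i] SU[of i j] pc cp cS0 by (auto split: if_splits)
        qed
        hence "card T = (if j = 0 then 1 else 0) + (p - (c+1))" by auto
        thus ?thesis using r'n[OF j] True ci cp by auto
      next
        case False
        have "\<not> b!0 \<le> r!j" using hr j False by simp
        hence "card (S j) < nat (b!0)" using rS[OF j] by simp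
        hence pc: "c < p - card (S j)" using Sp[of j] b0 by (simp add: c_def)
        have "T = S j"
        proof (intro equalityI subsetI)
          fix i assume iT: "i \<in> T"
          hence "i < p" by (simp add: T_def)
          thus "i \<in> S j" using Tm iT False h1 by (auto split: if_splits)
        next
          fix i assume iS: "i \<in> S j"
          hence ip: "i < p" by (simp add: S_def)
          hence "c < i" using SU[of i j] iS pc by simp
          thus "i \<in> T" using Tm[OF ip] iS by simp
        qed
        thus ?thesis using r'n[OF j] False h1 rS[OF j] by auto
      qed
    qed
  qed
  have U: "\<forall>i<length (vminus a k). \<bar>vminus a k' ! i\<bar> \<le> \<bar>vminus a k ! i\<bar>"
  proof (intro allI impI)
    fix i assume "i < length (vminus a k)"
    hence i: "i < p" using la lk by (simp add: vminus_len)
    have e: "vminus a k ! i = a!i - k!i" "vminus a k' ! i = a!i - k'!i"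
      using vminus_nth la lk lk' i by auto
    show "\<bar>vminus a k' ! i\<bar> \<le> \<bar>vminus a k ! i\<bar>"
    proof (cases "i \<le> c")
      case True
      thus ?thesis using e k'n[OF i] aqc[OF True] kbi[OF i] kc[of i] i by auto
    next
      case False
      thus ?thesis using e k'n[OF i] by auto
    qed
  qed
  have V: "\<forall>j<length (vminus b r). \<bar>vminus b r' ! j\<bar> \<le> \<bar>vminus b r ! j\<bar>"
  proof (intro allI impI)
    fix j assume "j < length (vminus b r)"
    hence j: "j < q" using lb lr by (simp add: vminus_len)
    have e: "vminus b r ! j = b!j - r!j" "vminus b r' ! j = b!j - r'!j"
      using vminus_nth lb lr lr' j by auto
    show "\<bar>vminus b r' ! j\<bar> \<le> \<bar>vminus b r ! j\<bar>"
      using e r'n[OF j] hr j b1 rb by auto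
  qed
  have V0: "\<bar>vminus b r' ! 0\<bar> < \<bar>vminus b r ! 0\<bar>"
    using vminus_nth[of b r 0] vminus_nth[of b r' 0] lb lr lr' q1 r'n[of 0] rb by auto
  have G: "brace (vminus a k) (vminus b r) \<ggreater> brace (vminus a k') (vminus b r')"
  proof (rule brace_gg)
    show "length (vminus a k') = length (vminus a k)" using la lk lk' by (simp add: vminus_len)
    show "length (vminus b r') = length (vminus b r)" using lb lr lr' by (simp add: vminus_len)
    show "\<forall>i<length (vminus a k). \<bar>vminus a k' ! i\<bar> \<le> \<bar>vminus a k ! i\<bar>" by (rule U)
    show "\<forall>j<length (vminus b r). \<bar>vminus b r' ! j\<bar> \<le> \<bar>vminus b r ! j\<bar>" by (rule V)
    show "(\<exists>i<length (vminus a k). \<bar>vminus a k' ! i\<bar> < \<bar>vminus a k ! i\<bar>) \<or>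
      (\<exists>j<length (vminus b r). \<bar>vminus b r' ! j\<bar> < \<bar>vminus b r ! j\<bar>)"
    proof (rule disjI2)
      have "0 < length (vminus b r)" using lb lr q1 by (simp add: vminus_len)
      thus "\<exists>j<length (vminus b r). \<bar>vminus b r' ! j\<bar> < \<bar>vminus b r ! j\<bar>" using V0 by blast
    qed
  qed
  show ?thesis using Om G by (auto simp: r'_def h_def)
qed


theorem lemma3p2:
  fixes p q f g :: nat and a b k r :: "int list"
  assumes "1 \<le> p" and "p \<le> q"
    and "length a = p" and "length b = q"
    and "k_dominant a b"
    and "k_dominant (minus_beta a) (minus_beta b)"
    and "1 \<le> f" and "f \<le> p" and "1 \<le> g" and "g \<le> q"
    and "in_Lambda p q f g a b"
    and "in_Omega p q k r"
  shows "(dR_weight p q a b \<and> k ! 0 > a ! 0 \<longrightarrow>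
            (\<exists>k' r'. in_Omega p q k' r' \<and>
               brace (vminus a k) (vminus b r) \<ggreater> brace (vminus a k') (vminus b r') \<and>
               k' = a ! 0 # replicate (last_ge k (a ! 0) - 1) (a ! 0 - 1)
                      @ drop (last_ge k (a ! 0)) k))
       \<and> (dL_weight p q a b \<and> r ! 0 > b ! 0 \<longrightarrow>
            (\<exists>k' r'. in_Omega p q k' r' \<and>
               brace (vminus a k) (vminus b r) \<ggreater> brace (vminus a k') (vminus b r') \<and>
               r' = b ! 0 # replicate (last_ge r (b ! 0) - 1) (b ! 0 - 1)
                      @ drop (last_ge r (b ! 0)) r))"
proof -
  note A = assms
  have q1: "1 \<le> q" using A(1,2) by simp
  have as: "sorted_wrt (\<ge>) a" and bs: "sorted_wrt (\<ge>) b"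
    using A(5) by (auto simp: k_dominant_def)
  have ms: "sorted_wrt (\<ge>) (a[0 := a!0 - 1])" "sorted_wrt (\<ge>) (b[0 := b!0 - 1])"
    using A(6) by (auto simp: k_dominant_def minus_beta_def)
  have a1: "\<forall>i<p. 1 \<le> i \<longrightarrow> a!i \<le> a!0 - 1"
  proof (intro allI impI)
    fix i assume i: "i < p" "1 \<le> i"
    have ii: "0 < i" "i < length (a[0 := a!0 - 1])" using i A(3) by auto
    have "(a[0 := a!0 - 1]) ! i \<le> (a[0 := a!0 - 1]) ! 0"
      using ms(1) ii unfolding sorted_wrt_iff_nth_less by blast
    thus "a!i \<le> a!0 - 1" using i A(3) by simp
  qed
  have b1: "\<forall>j<q. 1 \<le> j \<longrightarrow> b!j \<le> b!0 - 1"
  proof (intro allI impI)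
    fix i assume i: "i < q" "1 \<le> i"
    have ii: "0 < i" "i < length (b[0 := b!0 - 1])" using i A(4) by auto
    have "(b[0 := b!0 - 1]) ! i \<le> (b[0 := b!0 - 1]) ! 0"
      using ms(2) ii unfolding sorted_wrt_iff_nth_less by blast
    thus "b!i \<le> b!0 - 1" using i A(4) by simp
  qed
  have lam: "sum_list (take f a) + sum_list (take g b) > 2*int p*int q - 2*(int p - int f)*(int q - int g)"
    using A(11) by (simp add: in_Lambda_def)
  show ?thesis
  proof (intro conjI impI)
    assume H: "dR_weight p q a b \<and> k ! 0 > a ! 0"
    have w: "int q \<ge> a ! 0" "a ! 0 \<ge> 1" "2 * int p \<ge> b ! 0" "b ! 0 \<ge> int p + 1"
      using H by (auto simp: dR_weight_def)
    have bp: "int p \<le> b ! nat (int q - a!0)"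
      by (rule lam_bound[OF A(3,4,7,8,9,10) a1 b1 bs w(2,1,3,4) lam])
    show "\<exists>k' r'. in_Omega p q k' r' \<and>
               brace (vminus a k) (vminus b r) \<ggreater> brace (vminus a k') (vminus b r') \<and>
               k' = a ! 0 # replicate (last_ge k (a ! 0) - 1) (a ! 0 - 1)
                      @ drop (last_ge k (a ! 0)) k"
      by (rule partA[OF A(1,3,4) a1 w(2,1) bp bs A(12)]) (use H in simp)
  next
    assume H: "dL_weight p q a b \<and> r ! 0 > b ! 0"
    have w: "2 * int q \<ge> a ! 0" "a ! 0 \<ge> int q + 1" "int p \<ge> b ! 0" "b ! 0 \<ge> 1"
      using H by (auto simp: dL_weight_def)
    have lam': "sum_list (take g b) + sum_list (take f a) > 2*int q*int p - 2*(int q - int g)*(int p - int f)"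
      using lam by (simp add: algebra_simps)
    have aq: "int q \<le> a ! nat (int p - b!0)"
      by (rule lam_bound[OF A(4,3,9,10,7,8) b1 a1 as w(4,3,1,2) lam'])
    show "\<exists>k' r'. in_Omega p q k' r' \<and>
               brace (vminus a k) (vminus b r) \<ggreater> brace (vminus a k') (vminus b r') \<and>
               r' = b ! 0 # replicate (last_ge r (b ! 0) - 1) (b ! 0 - 1)
                      @ drop (last_ge r (b ! 0)) r"
      by (rule partB[OF A(1) q1 A(3,4) b1 w(4,3) aq as A(12)]) (use H in simp)
  qed
qed

end
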